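(* Let $\mathcal{L}_1,\mathcal{L}_2$ be objects of $\mathbf{Cal^0_{Sym}}$ and write $1_\circledast:=\Sigma_1\times\Sigma_2$. There is a bijection $$\xi:\Sigma'_\circledast\cup\{1_\circledast\}\to\mathbf{Cal^0_{Sym}}(\mathcal{L}_1,\mathcal{L}_2^{\mathrm{op}})$$ such that for every $x\in\Sigma'_\circledast\cup\{1_\circledast\}$, $$x=\bigcup\{\{p\}\times\Sigma[\xi(x)(p)]\,;\,p\in\Sigma_1\},$$ where $\xi(x)(p)\in\mathcal{L}_2^{\mathrm{op}}$ is regarded as an element of $\mathcal{L}_2$ and $\Sigma[\cdot]$ denotes the set of atoms of $\mathcal{L}_2$ below it.
   Context: For a complete lattice $\mathcal{L}_i$: $\Sigma_i,\Sigma_i'$ are its atoms and coatoms, $\Sigma[a]$ (resp. $\Sigma'[a]$) the atoms below (resp. coatoms above) $a$, $\mathsf{Cl}(\omega)=\{\Sigma[a];a\in\omega\}$, $\mathcal{L}^{\mathrm{op}}$ the dual lattice. For a map $f:\mathcal{L}_1\to\mathcal{L}_2$ between complete lattices, $f^\circ(b):=\bigvee\{a\in\mathcal{L}_1; f(a)\le b\}$. $\mathbf{Cal^0_{Sym}}$: objects are complete atomistic coatomistic lattices with $\Sigma[x]\cup\Sigma[y]\ne\Sigma$ for all coatoms $x,y$ and $\Sigma'[p]\cup\Sigma'[q]\ne\Sigma'$ for all atoms $p,q$; arrows $\mathcal{L}\to\mathcal{M}$ are maps $f$ preserving arbitrary joins, sending atoms to atoms or $0$, and such that $f^\circ$ sends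 coatoms to coatoms or $1$. For $R\subseteq\Sigma_1\times\Sigma_2$, $p=(p_1,p_2)$: $R_1[p]:=\{q_1;(q_1,p_2)\in R\}$, $R_2[p]:=\{q_2;(p_1,q_2)\in R\}$. $\Sigma'_\circledast:=\{R\subsetneqq\Sigma_1\times\Sigma_2\,;\,R_1[p]\in\mathsf{Cl}(\Sigma_1'\cup\{1\}),\ R_2[p]\in\mathsf{Cl}(\Sigma_2'\cup\{1\})\ \forall p\}$; $\mathcal{L}_1\circledast\mathcal{L}_2:=\{\bigcap\omega;\omega\subseteq\Sigma'_\circledast\cup\{\Sigma_1\times\Sigma_2\}\}$ ordered by inclusion. *)

theory Defs
  imports Main "HOL-Library.Dual_Ordered_Lattice"
begin

text \<open>Complete lattices are modelled by types of class complete_lattice;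
  the dual lattice L^op is the type 'a dual (HOL-Library.Dual_Ordered_Lattice).\<close>

definition atoms :: "'a::complete_lattice set" where
  "atoms = {a. a \<noteq> bot \<and> (\<forall>b. b \<le> a \<longrightarrow> b = bot \<or> b = a)}"

definition coatoms :: "'a::complete_lattice set" where
  "coatoms = {a. a \<noteq> top \<and> (\<forall>b. a \<le> b \<longrightarrow> b = top \<or> b = a)}"

definition atoms_below :: "'a::complete_lattice \<Rightarrow> 'a set" where
  "atoms_below a = {p \<in> atoms. p \<le> a}"

definition coatoms_above :: "'a::complete_lattice \<Rightarrow> 'a set" where
  "coatoms_above a = {x \<in> coatoms. a \<le> x}"

definition Cl :: "'a::complete_lattice set \<Rightarrow> 'a set set" where
  "Cl \<omega> = atoms_below ` \<omega>"

definition atomistic :: "'a::complete_lattice itself \<Rightarrow> bool" where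
  "atomistic _ \<longleftrightarrow> (\<forall>a::'a. a = Sup (atoms_below a))"

definition coatomistic :: "'a::complete_lattice itself \<Rightarrow> bool" where
  "coatomistic _ \<longleftrightarrow> (\<forall>a::'a. a = Inf (coatoms_above a))"

definition cal0sym_obj :: "'a::complete_lattice itself \<Rightarrow> bool" where
  "cal0sym_obj T \<longleftrightarrow> atomistic T \<and> coatomistic T
     \<and> (\<forall>x\<in>(coatoms::'a set). \<forall>y\<in>coatoms. atoms_below x \<union> atoms_below y \<noteq> atoms)
     \<and> (\<forall>p\<in>(atoms::'a set). \<forall>q\<in>atoms. coatoms_above p \<union> coatoms_above q \<noteq> coatoms)"

definition radj :: "('a::complete_lattice \<Rightarrow> 'b::complete_lattice) \<Rightarrow> 'b \<Rightarrow> 'a" where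
  "radj f b = Sup {a. f a \<le> b}"

definition cal0sym_arrow :: "('a::complete_lattice \<Rightarrow> 'b::complete_lattice) \<Rightarrow> bool" where
  "cal0sym_arrow f \<longleftrightarrow>
     (\<forall>S. f (Sup S) = Sup (f ` S))
     \<and> (\<forall>a\<in>atoms. f a \<in> atoms \<or> f a = bot)
     \<and> (\<forall>x\<in>coatoms. radj f x \<in> coatoms \<or> radj f x = top)"

definition cal0sym_hom :: "('a::complete_lattice \<Rightarrow> 'b::complete_lattice) set" where
  "cal0sym_hom = {f. cal0sym_arrow f}"

definition rel1 :: "('a \<times> 'b) set \<Rightarrow> 'a \<times> 'b \<Rightarrow> 'a set" where
  "rel1 R p = {q1. (q1, snd p) \<in> R}"

definition rel2 :: "('a \<times> 'b) set \<Rightarrow> 'a \<times> 'b \<Rightarrow> 'b set" where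
  "rel2 R p = {q2. (fst p, q2) \<in> R}"

definition coatoms_tensor :: "('a::complete_lattice \<times> 'b::complete_lattice) set set" where
  "coatoms_tensor = {R. R \<subset> atoms \<times> atoms \<and>
      (\<forall>p \<in> atoms \<times> atoms. rel1 R p \<in> Cl (coatoms \<union> {top})
                          \<and> rel2 R p \<in> Cl (coatoms \<union> {top}))}"

end

theory Submission
  imports Defs
begin

lemma all_dual_iff: "(\<forall>b::'b dual. P b) \<longleftrightarrow> (\<forall>y. P (dual y))"
  by (metis dual_undual)

lemma atoms_dual: "(d::'b::complete_lattice dual) \<in> atoms \<longleftrightarrow> undual d \<in> coatoms"
proof -
  obtain x where d: "d = dual x" by (metis dual_undual)
  have "(\<forall>b::'b dual. b \<le> dual x \<longrightarrow> b = bot \<or> b = dual x) \<longleftrightarrow>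
        (\<forall>b::'b. x \<le> b \<longrightarrow> b = top \<or> b = x)"
    by (simp add: all_dual_iff flip: dual_top_eq)
  moreover have "(dual x = bot) \<longleftrightarrow> x = top" by (simp flip: dual_top_eq)
  ultimately show ?thesis unfolding atoms_def coatoms_def d by simp
qed

lemma coatoms_dual: "(d::'b::complete_lattice dual) \<in> coatoms \<longleftrightarrow> undual d \<in> atoms"
proof -
  obtain x where d: "d = dual x" by (metis dual_undual)
  have "(\<forall>b::'b dual. dual x \<le> b \<longrightarrow> b = top \<or> b = dual x) \<longleftrightarrow>
        (\<forall>b::'b. b \<le> x \<longrightarrow> b = bot \<or> b = x)"
    by (simp add: all_dual_iff flip: dual_bot_eq)
  moreover have "(dual x = top) \<longleftrightarrow> x = bot" by (simp flip: dual_bot_eq)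
  ultimately show ?thesis unfolding atoms_def coatoms_def d by simp
qed

lemma le_atoms:
  assumes "atomistic TYPE('a::complete_lattice)"
  shows "((y::'a) \<le> z) \<longleftrightarrow> atoms_below y \<subseteq> atoms_below z"
proof
  assume "y \<le> z" thus "atoms_below y \<subseteq> atoms_below z"
    unfolding atoms_below_def by auto
next
  assume "atoms_below y \<subseteq> atoms_below z"
  hence "Sup (atoms_below y) \<le> Sup (atoms_below z)" by (rule Sup_subset_mono)
  thus "y \<le> z" using assms unfolding atomistic_def by metis
qed

lemma atom_below_atom: "(p::'a::complete_lattice) \<in> atoms \<Longrightarrow> atoms_below p = {p}"
  unfolding atoms_below_def atoms_def by auto

lemma no_atoms:
  assumes "atomistic TYPE('a::complete_lattice)" "(atoms::'a set) = {}"
  shows "(x::'a) = bot"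
proof -
  have "x = Sup (atoms_below x)" using assms(1) unfolding atomistic_def by metis
  also have "atoms_below x = {}" using assms(2) unfolding atoms_below_def by auto
  finally show ?thesis by simp
qed

lemma Sup_atoms_below:
  assumes "atomistic TYPE('a::complete_lattice)"
  shows "Sup (atoms_below (c::'a)) = c"
  using assms unfolding atomistic_def by metis

definition DD :: "('a::complete_lattice \<times> 'b::complete_lattice) set set" where
  "DD = {R. R \<subseteq> atoms \<times> atoms \<and>
      (\<forall>p \<in> atoms \<times> atoms. rel1 R p \<in> Cl (coatoms \<union> {top})
                          \<and> rel2 R p \<in> Cl (coatoms \<union> {top}))}"

lemma DD_eq:
  assumes "atomistic TYPE('a::complete_lattice)" "atomistic TYPE('b::complete_lattice)"
  shows "coatoms_tensor \<union> {atoms \<times> atoms} = (DD :: ('a \<times> 'b) set set)"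
proof -
  have t1: "atoms_below (top::'a) = atoms" unfolding atoms_below_def by auto
  have t2: "atoms_below (top::'b) = atoms" unfolding atoms_below_def by auto
  have "(atoms \<times> atoms :: ('a \<times> 'b) set) \<in> DD"
    unfolding DD_def rel1_def rel2_def Cl_def
    using t1 t2 by (auto simp: image_iff)
  thus ?thesis unfolding DD_def coatoms_tensor_def by auto
qed

definition gR :: "('a \<times> 'b) set \<Rightarrow> 'a \<Rightarrow> 'b::complete_lattice" where
  "gR R p = Sup {q. (p,q) \<in> R}"

definition hR :: "('a \<times> 'b) set \<Rightarrow> 'b \<Rightarrow> 'a::complete_lattice" where
  "hR R q = Sup {p. (p,q) \<in> R}"

definition xiR :: "('a::complete_lattice \<times> 'b::complete_lattice) set \<Rightarrow> 'a \<Rightarrow> 'b dual" where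
  "xiR R a = dual (Inf (gR R ` atoms_below a))"

lemma Cl_SupD:
  assumes "atomistic TYPE('a::complete_lattice)" "(S::'a set) \<in> Cl (coatoms \<union> {top})"
  shows "S = atoms_below (Sup S) \<and> Sup S \<in> coatoms \<union> {top}"
  using assms(2) Sup_atoms_below[OF assms(1)] unfolding Cl_def by auto

lemma row:
  assumes "atomistic TYPE('a::complete_lattice)" "atomistic TYPE('b::complete_lattice)"
    and "R \<in> (DD :: ('a \<times> 'b) set set)" "p \<in> atoms"
  shows "{q. (p,q) \<in> R} = atoms_below (gR R p) \<and> gR R p \<in> coatoms \<union> {top}"
proof (cases "(atoms::'b set) = {}")
  case True
  hence "\<And>x::'b. x = bot" using no_atoms assms(2) by blast
  moreover have "{q. (p,q) \<in> R} = {}" using assms(3) True unfolding DD_def by auto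
  moreover have "atoms_below (gR R p) = {}" using True unfolding atoms_below_def by auto
  ultimately show ?thesis by (metis UnI2 insertI1)
next
  case False
  then obtain q0 where q0: "(q0::'b) \<in> atoms" by auto
  have "rel2 R (p,q0) \<in> Cl (coatoms \<union> {top})" using assms(3,4) q0 unfolding DD_def by auto
  moreover have "rel2 R (p,q0) = {q. (p,q) \<in> R}" unfolding rel2_def by auto
  ultimately show ?thesis using Cl_SupD[OF assms(2)] unfolding gR_def by metis
qed

lemma col:
  assumes "atomistic TYPE('a::complete_lattice)" "atomistic TYPE('b::complete_lattice)"
    and "R \<in> (DD :: ('a \<times> 'b) set set)" "q \<in> atoms"
  shows "{p. (p,q) \<in> R} = atoms_below (hR R q) \<and> hR R q \<in> coatoms \<union> {top}"
proof (cases "(atoms::'a set) = {}")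
  case True
  hence "\<And>x::'a. x = bot" using no_atoms assms(1) by blast
  moreover have "{p. (p,q) \<in> R} = {}" using assms(3) True unfolding DD_def by auto
  moreover have "atoms_below (hR R q) = {}" using True unfolding atoms_below_def by auto
  ultimately show ?thesis by (metis UnI2 insertI1)
next
  case False
  then obtain p0 where p0: "(p0::'a) \<in> atoms" by auto
  have "rel1 R (p0,q) \<in> Cl (coatoms \<union> {top})" using assms(3,4) p0 unfolding DD_def by auto
  moreover have "rel1 R (p0,q) = {p. (p,q) \<in> R}" unfolding rel1_def by auto
  ultimately show ?thesis using Cl_SupD[OF assms(1)] unfolding hR_def by metis
qed

lemma xiR_atom: "p \<in> atoms \<Longrightarrow> xiR R p = dual (gR R p)"
  unfolding xiR_def by (simp add: atom_below_atom)

lemma formula: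
  assumes "atomistic TYPE('a::complete_lattice)" "atomistic TYPE('b::complete_lattice)"
    and "R \<in> (DD :: ('a \<times> 'b) set set)"
  shows "R = (\<Union>p\<in>atoms. {p} \<times> atoms_below (undual (xiR R p)))"
proof -
  have "R \<subseteq> atoms \<times> atoms" using assms(3) unfolding DD_def by auto
  moreover have "\<And>p. p \<in> atoms \<Longrightarrow> {q. (p,q) \<in> R} = atoms_below (undual (xiR R p))"
    using row[OF assms] xiR_atom by (metis undual_dual)
  ultimately show ?thesis by blast
qed

lemma Sup_atMost_eq: "Sup {b. b \<le> (c::'a::complete_lattice)} = c"
  by (rule antisym) (auto intro: Sup_least Sup_upper)

lemma xiR_arrow:
  assumes A: "atomistic TYPE('a::complete_lattice)" and B: "atomistic TYPE('b::complete_lattice)"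
    and R: "R \<in> (DD :: ('a \<times> 'b) set set)"
  shows "cal0sym_arrow (xiR R)"
proof -
  have Rsub: "R \<subseteq> atoms \<times> atoms" using R unfolding DD_def by auto
  have rowq: "\<And>p q. p \<in> atoms \<Longrightarrow> q \<in> atoms \<Longrightarrow> (p,q) \<in> R \<longleftrightarrow> q \<le> gR R p"
  proof -
    fix p q assume p: "(p::'a) \<in> atoms" and q: "(q::'b) \<in> atoms"
    have "{q. (p,q) \<in> R} = atoms_below (gR R p)" using row[OF A B R p] by blast
    thus "(p,q) \<in> R \<longleftrightarrow> q \<le> gR R p" using q unfolding atoms_below_def by blast
  qed
  have colq: "\<And>p q. p \<in> atoms \<Longrightarrow> q \<in> atoms \<Longrightarrow> (p,q) \<in> R \<longleftrightarrow> p \<le> hR R q"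
  proof -
    fix p q assume p: "(p::'a) \<in> atoms" and q: "(q::'b) \<in> atoms"
    have "{p. (p,q) \<in> R} = atoms_below (hR R q)" using col[OF A B R q] by blast
    thus "(p,q) \<in> R \<longleftrightarrow> p \<le> hR R q" using p unfolding atoms_below_def by blast
  qed
  have key: "\<And>b q. q \<in> atoms \<Longrightarrow> q \<le> Inf (gR R ` atoms_below b) \<longleftrightarrow> b \<le> hR R q"
  proof -
    fix b and q :: 'b assume q: "q \<in> atoms"
    have "q \<le> Inf (gR R ` atoms_below b) \<longleftrightarrow> (\<forall>p\<in>atoms_below b. q \<le> gR R p)"
      by (simp add: le_Inf_iff)
    also have "\<dots> \<longleftrightarrow> (\<forall>p\<in>atoms_below b. p \<le> hR R q)"
      using rowq colq q unfolding atoms_below_def by auto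
    also have "\<dots> \<longleftrightarrow> atoms_below b \<subseteq> atoms_below (hR R q)"
      unfolding atoms_below_def by auto
    also have "\<dots> \<longleftrightarrow> b \<le> hR R q" using le_atoms[OF A] by simp
    finally show "q \<le> Inf (gR R ` atoms_below b) \<longleftrightarrow> b \<le> hR R q" .
  qed
  have sup: "xiR R (Sup S) = Sup (xiR R ` S)" for S
  proof -
    have "Inf (gR R ` atoms_below (Sup S)) = Inf ((\<lambda>s. Inf (gR R ` atoms_below s)) ` S)"
    proof (rule antisym)
      show "Inf (gR R ` atoms_below (Sup S)) \<le> Inf ((\<lambda>s. Inf (gR R ` atoms_below s)) ` S)"
      proof (rule Inf_greatest, clarify)
        fix s assume "s \<in> S"
        hence "atoms_below s \<subseteq> atoms_below (Sup S)" unfolding atoms_below_def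
          using Sup_upper order_trans by blast
        thus "Inf (gR R ` atoms_below (Sup S)) \<le> Inf (gR R ` atoms_below s)"
          by (intro Inf_superset_mono) auto
      qed
    next
      let ?m = "Inf ((\<lambda>s. Inf (gR R ` atoms_below s)) ` S)"
      have "atoms_below ?m \<subseteq> atoms_below (Inf (gR R ` atoms_below (Sup S)))"
      proof
        fix q assume "q \<in> atoms_below ?m"
        hence q: "q \<in> atoms" and qm: "q \<le> ?m" unfolding atoms_below_def by blast+
        have "\<forall>s\<in>S. s \<le> hR R q"
        proof
          fix s assume "s \<in> S"
          hence "q \<le> Inf (gR R ` atoms_below s)" using order_trans[OF qm INF_lower] by blast
          thus "s \<le> hR R q" using key[OF q] by blast
        qed
        hence "Sup S \<le> hR R q" by (simp add: Sup_least)
        hence "q \<le> Inf (gR R ` atoms_below (Sup S))" using key[OF q] by blast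
        thus "q \<in> atoms_below (Inf (gR R ` atoms_below (Sup S)))"
          using q unfolding atoms_below_def by blast
      qed
      thus "?m \<le> Inf (gR R ` atoms_below (Sup S))" by (rule le_atoms[OF B, THEN iffD2])
    qed
    moreover have "undual ` xiR R ` S = (\<lambda>s. Inf (gR R ` atoms_below s)) ` S"
      unfolding image_comp comp_def xiR_def undual_dual ..
    ultimately have "undual (xiR R (Sup S)) = undual (Sup (xiR R ` S))"
      unfolding undual_Sup_eq xiR_def undual_dual by simp
    thus ?thesis using dual_eq_iff by blast
  qed
  have at: "\<forall>a\<in>atoms. xiR R a \<in> atoms \<or> xiR R a = bot"
  proof
    fix a :: 'a assume a: "a \<in> atoms"
    have "gR R a \<in> coatoms \<union> {top}" using row[OF A B R a] by blast
    thus "xiR R a \<in> atoms \<or> xiR R a = bot"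
    proof
      assume "gR R a \<in> coatoms"
      thus ?thesis using xiR_atom[OF a] atoms_dual by (metis undual_dual)
    next
      assume "gR R a \<in> {top}"
      hence "xiR R a = dual top" using xiR_atom[of a R, OF a] by simp
      thus ?thesis unfolding dual_top_eq by (rule disjI2)
    qed
  qed
  have co: "\<forall>x\<in>coatoms. radj (xiR R) x \<in> coatoms \<or> radj (xiR R) x = top"
  proof
    fix x :: "'b dual" assume x: "x \<in> coatoms"
    define q where "q = undual x"
    have q: "q \<in> atoms" using x coatoms_dual q_def by blast
    have "xiR R b \<le> x \<longleftrightarrow> b \<le> hR R q" for b
    proof -
      have "xiR R b \<le> x \<longleftrightarrow> q \<le> Inf (gR R ` atoms_below b)"
        unfolding q_def xiR_def by (rule dual_less_eq_iff[THEN trans]) (simp add: image_image)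
      thus ?thesis using key[OF q] by blast
    qed
    hence "{b. xiR R b \<le> x} = {b. b \<le> hR R q}" by blast
    hence "radj (xiR R) x = hR R q" unfolding radj_def using Sup_atMost_eq by metis
    moreover have "hR R q \<in> coatoms \<union> {top}" using col[OF A B R q] by blast
    ultimately show "radj (xiR R) x \<in> coatoms \<or> radj (xiR R) x = top" by auto
  qed
  show ?thesis unfolding cal0sym_arrow_def using sup at co by blast
qed

definition Rf :: "('a::complete_lattice \<Rightarrow> 'b::complete_lattice dual) \<Rightarrow> ('a \<times> 'b) set" where
  "Rf f = {(p,q). p \<in> atoms \<and> q \<in> atoms \<and> q \<le> undual (f p)}"

lemma arrow_mono:
  assumes "\<forall>S. f (Sup S) = Sup (f ` S)" "a \<le> (b::'a::complete_lattice)"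
  shows "f a \<le> (f b :: 'c::complete_lattice)"
proof -
  have "Sup {a, b} = b" using assms(2) by (simp add: sup.absorb2)
  hence "f b = Sup {f a, f b}" using assms(1) by (metis image_insert image_empty)
  thus ?thesis by (metis Sup_upper insertI1)
qed

lemma arrow_galois:
  assumes "\<forall>S. f (Sup S) = Sup (f ` S)"
  shows "(f (b::'a::complete_lattice) \<le> (y::'c::complete_lattice)) \<longleftrightarrow> b \<le> radj f y"
proof
  assume "f b \<le> y" thus "b \<le> radj f y" unfolding radj_def by (simp add: Sup_upper)
next
  assume "b \<le> radj f y"
  hence "f b \<le> f (radj f y)" using arrow_mono[OF assms] by blast
  also have "f (radj f y) = Sup (f ` {a. f a \<le> y})" unfolding radj_def using assms by blast
  also have "\<dots> \<le> y" by (rule Sup_least) blast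
  finally show "f b \<le> y" .
qed

lemma surj_part:
  assumes A: "atomistic TYPE('a::complete_lattice)" and B: "atomistic TYPE('b::complete_lattice)"
    and f: "cal0sym_arrow (f :: 'a \<Rightarrow> 'b dual)"
  shows "Rf f \<in> DD \<and> xiR (Rf f) = f"
proof -
  have sup: "\<forall>S. f (Sup S) = Sup (f ` S)" using f unfolding cal0sym_arrow_def by blast
  have fat: "undual (f p) \<in> coatoms \<union> {top}" if p: "p \<in> atoms" for p
  proof -
    have "f p \<in> atoms \<or> f p = bot" using f p unfolding cal0sym_arrow_def by blast
    thus ?thesis using atoms_dual by auto
  qed
  have rco: "radj f (dual q) \<in> coatoms \<union> {top}" if q: "q \<in> atoms" for q
  proof -
    have "dual q \<in> coatoms" using q coatoms_dual[of "dual q"] by simp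
    thus ?thesis using f unfolding cal0sym_arrow_def by blast
  qed
  have r2: "rel2 (Rf f) (p1,p2) = atoms_below (undual (f p1))" if "p1 \<in> atoms" for p1 p2
    using that unfolding rel2_def Rf_def atoms_below_def by auto
  have r1: "rel1 (Rf f) (p1,p2) = atoms_below (radj f (dual p2))" if "p2 \<in> atoms" for p1 p2
  proof -
    have "p2 \<le> undual (f q1) \<longleftrightarrow> q1 \<le> radj f (dual p2)" for q1
    proof -
      have "p2 \<le> undual (f q1) \<longleftrightarrow> f q1 \<le> dual p2" by (simp add: dual_less_eq_iff)
      thus ?thesis using arrow_galois[OF sup] by blast
    qed
    thus ?thesis using that unfolding rel1_def Rf_def atoms_below_def by auto
  qed
  have DD: "Rf f \<in> DD"
    unfolding DD_def
  proof (intro CollectI conjI ballI)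
    show "Rf f \<subseteq> atoms \<times> atoms" unfolding Rf_def by auto
  next
    fix p assume p: "p \<in> (atoms::'a set) \<times> (atoms::'b set)"
    then obtain p1 p2 where pp: "p = (p1,p2)" "p1 \<in> atoms" "p2 \<in> atoms" by auto
    show "rel1 (Rf f) p \<in> Cl (coatoms \<union> {top})"
      unfolding pp(1) r1[OF pp(3)] Cl_def using rco[OF pp(3)] by blast
    show "rel2 (Rf f) p \<in> Cl (coatoms \<union> {top})"
      unfolding pp(1) r2[OF pp(2)] Cl_def using fat[OF pp(2)] by blast
  qed
  have g: "gR (Rf f) p = undual (f p)" if p: "p \<in> atoms" for p
  proof -
    have "{q. (p,q) \<in> Rf f} = atoms_below (undual (f p))"
      using p unfolding Rf_def atoms_below_def by auto
    thus ?thesis unfolding gR_def using Sup_atoms_below[OF B] by simp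
  qed
  have "xiR (Rf f) a = f a" for a
  proof -
    have "undual (f a) = undual (f (Sup (atoms_below a)))" using Sup_atoms_below[OF A] by simp
    also have "\<dots> = Inf (undual ` f ` atoms_below a)" using sup undual_Sup_eq by metis
    also have "\<dots> = Inf (gR (Rf f) ` atoms_below a)"
      using g unfolding atoms_below_def image_image by (intro arg_cong[where f=Inf] image_cong) auto
    finally have "undual (f a) = undual (xiR (Rf f) a)" unfolding xiR_def undual_dual .
    thus ?thesis using dual_eq_iff by metis
  qed
  thus ?thesis using DD by blast
qed

theorem lemma4p4:
  assumes "cal0sym_obj TYPE('a::complete_lattice)"
      and "cal0sym_obj TYPE('b::complete_lattice)"
  shows "\<exists>\<xi> :: ('a \<times> 'b) set \<Rightarrow> 'a \<Rightarrow> 'b dual.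
           bij_betw \<xi> (coatoms_tensor \<union> {atoms \<times> atoms}) cal0sym_hom
         \<and> (\<forall>x \<in> coatoms_tensor \<union> {atoms \<times> atoms}.
               x = (\<Union>p\<in>atoms. {p} \<times> atoms_below (undual (\<xi> x p))))"
proof -
  have A: "atomistic TYPE('a)" using assms(1) unfolding cal0sym_obj_def by blast
  have B: "atomistic TYPE('b)" using assms(2) unfolding cal0sym_obj_def by blast
  have D: "coatoms_tensor \<union> {atoms \<times> atoms} = (DD :: ('a \<times> 'b) set set)" by (rule DD_eq[OF A B])
  have F: "\<forall>x \<in> (DD :: ('a \<times> 'b) set set). x = (\<Union>p\<in>atoms. {p} \<times> atoms_below (undual (xiR x p)))"
    using formula[OF A B] by blast
  have inj: "inj_on xiR (DD :: ('a \<times> 'b) set set)"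
  proof (rule inj_onI)
    fix x y assume "x \<in> (DD :: ('a \<times> 'b) set set)" "y \<in> DD" "xiR x = xiR y"
    thus "x = y" using F by metis
  qed
  have img: "xiR ` (DD :: ('a \<times> 'b) set set) = cal0sym_hom"
  proof
    show "xiR ` (DD :: ('a \<times> 'b) set set) \<subseteq> cal0sym_hom"
      unfolding cal0sym_hom_def using xiR_arrow[OF A B] by blast
    show "cal0sym_hom \<subseteq> xiR ` (DD :: ('a \<times> 'b) set set)"
    proof
      fix f :: "'a \<Rightarrow> 'b dual" assume "f \<in> cal0sym_hom"
      hence "cal0sym_arrow f" unfolding cal0sym_hom_def by simp
      from surj_part[OF A B this] show "f \<in> xiR ` DD" by (metis image_eqI)
    qed
  qed
  show ?thesis unfolding D
    by (rule exI[where x=xiR]) (use inj img F in \<open>auto simp: bij_betw_def\<close>)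
qed

end
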